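(* Let $k,m$ be integers with $k\geqslant 2$ and $m>2k$, and let $n=2k-2$. Then $\alpha(m,n,k)=h(m,n,k)$. Moreover, every $(m,2k-2,k)$-intersecting family of maximum cardinality is of the form \[ \binom{[2k-2]}{k}\cup\{F\cup\{b\}\mid F\in\mathcal{F}^*,\ b\in[2k-1,m]\}, \] where $\mathcal{F}^*$ is an intersecting family of $(k-1)$-subsets of $[2k-2]$ of maximum cardinality.
   Context: For positive integers $a\leqslant b$, $[a,b]=\{a,a+1,\dots,b\}$ and $[a]=[1,a]$; $\binom{X}{k}$ denotes the family of all $k$-subsets of a set $X$. A family of sets is intersecting if no two of its members are disjoint. For integers $0<k\leqslant n<2k<m$, an $(m,n,k)$-intersecting family is an intersecting family $\mathcal{F}$ with $\binom{[n]}{k}\subseteq\mathcal{F}\subseteq\binom{[m]}{k}$, and $\alpha(m,n,k)$ is the maximum cardinality of an $(m,n,k)$-intersecting family. Define $h(m,n,k)=\binom{n}{k}+\sum_{i=1}^{2k-n-1}\binom{n-1}{k-i-1}\binom{m-n}{i}$. *)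

theory Defs
  imports Main
begin

definition ksubsets :: "nat set \<Rightarrow> nat \<Rightarrow> nat set set" where
  "ksubsets X k = {A. A \<subseteq> X \<and> card A = k}"

definition intersecting :: "nat set set \<Rightarrow> bool" where
  "intersecting \<F> \<longleftrightarrow> (\<forall>A\<in>\<F>. \<forall>B\<in>\<F>. A \<inter> B \<noteq> {})"

definition mnk_intersecting :: "nat \<Rightarrow> nat \<Rightarrow> nat \<Rightarrow> nat set set \<Rightarrow> bool" where
  "mnk_intersecting m n k \<F> \<longleftrightarrow>
     intersecting \<F> \<and> ksubsets {1..n} k \<subseteq> \<F> \<and> \<F> \<subseteq> ksubsets {1..m} k"

definition alpha :: "nat \<Rightarrow> nat \<Rightarrow> nat \<Rightarrow> nat" where
  "alpha m n k = Max {card \<F> | \<F>. mnk_intersecting m n k \<F>}"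

definition h :: "nat \<Rightarrow> nat \<Rightarrow> nat \<Rightarrow> nat" where
  "h m n k = (n choose k) +
     (\<Sum>i = 1..2*k - n - 1. ((n - 1) choose (k - i - 1)) * ((m - n) choose i))"

end

theory Submission
  imports Defs
begin

context
  fixes k m :: nat
  assumes k2: "k \<ge> 2" and mk: "m > 2 * k"
begin

abbreviation "NN \<equiv> {1..2*k-2}"
abbreviation "BB \<equiv> {2*k-1..m}"
abbreviation "KK \<equiv> ksubsets NN (k-1)"
abbreviation "MM \<equiv> m + 2 - 2*k"
abbreviation "PP \<equiv> (2*k-3) choose (k-2)"

definition sX :: "nat set set \<Rightarrow> nat set \<Rightarrow> nat set" where
  "sX F A = {b \<in> BB. insert b A \<in> F}"

lemma card_BB: "card BB = MM" using mk k2 by simp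

lemma card_KK: "card KK = 2 * PP"
proof -
  have "card KK = (2*k-2) choose (k-1)"
    unfolding ksubsets_def using n_subsets[of NN "k-1"] by simp
  moreover obtain j where j: "k = j + 2" using k2 by (metis add.commute le_add_diff_inverse)
  moreover have "(2*j+2) choose (j+1) = 2 * ((2*j+1) choose j)"
  proof -
    have "(2*j+1) choose (j+1) = (2*j+1) choose j"
      using binomial_symmetric[of "j+1" "2*j+1"] by simp
    moreover have "(2*j+2) choose (j+1) = ((2*j+1) choose j) + ((2*j+1) choose (j+1))"
      using binomial_Suc_Suc[of "2*j+1" j] by simp
    ultimately show ?thesis by simp
  qed
  ultimately show ?thesis by (simp add: algebra_simps)
qed

lemma card_kN: "card (ksubsets NN k) = (2*k-2) choose k"
  unfolding ksubsets_def using n_subsets[of NN k] by simp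

lemma h_val: "h m (2*k-2) k = ((2*k-2) choose k) + PP * MM"
proof -
  have "2*k - (2*k-2) - 1 = 1" using k2 by simp
  moreover have "2*k-2-1 = 2*k-3" "k - 1 - 1 = k - 2" "m - (2*k-2) = MM" using k2 mk by auto
  ultimately show ?thesis unfolding h_def by simp
qed

lemma compl_KK: "A \<in> KK \<Longrightarrow> NN - A \<in> KK"
  unfolding ksubsets_def using k2 by (auto simp: card_Diff_subset finite_subset)

lemma struct:
  assumes F: "mnk_intersecting m (2*k-2) k F" and G: "G \<in> F" and nG: "G \<notin> ksubsets NN k"
  shows "\<exists>A b. A \<in> KK \<and> b \<in> BB \<and> G = insert b A"
proof -
  have Gm: "G \<subseteq> {1..m}" and cG: "card G = k" using F G unfolding mnk_intersecting_def ksubsets_def by auto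
  have fG: "finite G" using Gm finite_subset by blast
  define A where "A = G \<inter> NN"
  have AG: "A \<subseteq> G" and AN: "A \<subseteq> NN" unfolding A_def by auto
  have cA: "card A \<le> k" using card_mono[OF fG AG] cG by simp
  have "card A \<noteq> k"
  proof
    assume "card A = k"
    hence "A = G" using card_subset_eq[OF fG AG] cG by simp
    thus False using nG AN cG unfolding ksubsets_def by auto
  qed
  moreover have "\<not> card A \<le> k - 2"
  proof
    assume a: "card A \<le> k - 2"
    have "card (NN - A) = 2*k-2 - card A" using AN by (simp add: card_Diff_subset finite_subset)
    hence "k \<le> card (NN - A)" using a k2 by simp
    then obtain C where C: "C \<subseteq> NN - A" "card C = k" by (metis obtain_subset_with_card_n)
    hence "C \<in> F" using F unfolding mnk_intersecting_def ksubsets_def by auto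
    moreover have "C \<inter> G = {}" using C unfolding A_def by auto
    ultimately show False using F G unfolding mnk_intersecting_def intersecting_def by blast
  qed
  ultimately have cA1: "card A = k - 1" using cA by linarith
  have "card (G - A) = 1" using card_Diff_subset[OF finite_subset[OF AG fG] AG] cG cA1 k2 by simp
  then obtain b where b: "G - A = {b}" using card_1_singletonE by blast
  have "b \<in> G" "b \<notin> NN" using b unfolding A_def by auto
  hence "b \<in> BB" using Gm by auto
  moreover have "G = insert b A" using b AG by blast
  moreover have "A \<in> KK" using AN cA1 unfolding ksubsets_def by simp
  ultimately show ?thesis by blast
qed

lemma cross:
  assumes F: "mnk_intersecting m (2*k-2) k F" and AN: "A \<subseteq> NN"
    and b: "b \<in> sX F A" and b': "b' \<in> sX F (NN - A)"
  shows "b = b'"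
proof -
  have "insert b A \<inter> insert b' (NN - A) \<noteq> {}"
    using F b b' unfolding mnk_intersecting_def intersecting_def sX_def by blast
  moreover have "b \<notin> NN" "b' \<notin> NN" using b b' unfolding sX_def by auto
  ultimately show ?thesis using AN by auto
qed

lemma sX_sub: "sX F A \<subseteq> BB" unfolding sX_def by auto

lemma pair:
  assumes F: "mnk_intersecting m (2*k-2) k F" and AN: "A \<subseteq> NN"
  shows "card (sX F A) + card (sX F (NN - A)) \<le> MM"
    and "sX F A \<noteq> {} \<Longrightarrow> sX F (NN - A) \<noteq> {} \<Longrightarrow> card (sX F A) + card (sX F (NN - A)) = 2"
proof -
  have c1: "card (sX F A) \<le> MM" "card (sX F (NN-A)) \<le> MM"
    using card_mono[OF _ sX_sub] card_BB by (metis finite_atLeastAtMost)+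
  show e: "sX F A \<noteq> {} \<Longrightarrow> sX F (NN - A) \<noteq> {} \<Longrightarrow> card (sX F A) + card (sX F (NN - A)) = 2"
  proof -
    assume "sX F A \<noteq> {}" "sX F (NN - A) \<noteq> {}"
    then obtain b b' where bb: "b \<in> sX F A" "b' \<in> sX F (NN - A)" by blast
    have "sX F A = {b}" using cross[OF F AN _ bb(2)] cross[OF F AN bb(1)] bb by blast
    moreover have "sX F (NN-A) = {b}" using cross[OF F AN bb(1)] bb by blast
    ultimately show ?thesis by simp
  qed
  show "card (sX F A) + card (sX F (NN - A)) \<le> MM"
  proof (cases "sX F A = {} \<or> sX F (NN - A) = {}")
    case True thus ?thesis using c1 by auto
  next
    case False thus ?thesis using e mk by auto
  qed
qed

lemma finite_KK: "finite KK"
  by (rule finite_subset[of _ "Pow NN"]) (auto simp: ksubsets_def)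

lemma compl_image_KK: "(\<lambda>A. NN - A) ` KK = KK"
proof
  show "(\<lambda>A. NN - A) ` KK \<subseteq> KK" using compl_KK by auto
  show "KK \<subseteq> (\<lambda>A. NN - A) ` KK"
  proof
    fix A assume A: "A \<in> KK"
    hence "A = NN - (NN - A)" unfolding ksubsets_def by auto
    thus "A \<in> (\<lambda>A. NN - A) ` KK" using compl_KK[OF A] by blast
  qed
qed

lemma inj_compl: "inj_on (\<lambda>A. NN - A) KK"
  unfolding inj_on_def ksubsets_def by blast

lemma int_le:
  assumes G: "G \<subseteq> KK" "intersecting G"
  shows "card G \<le> PP"
proof -
  have d: "G \<inter> (\<lambda>A. NN - A) ` G = {}"
    using G unfolding intersecting_def by auto
  have s: "G \<union> (\<lambda>A. NN - A) ` G \<subseteq> KK" using G compl_KK by auto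
  have fG: "finite G" using G finite_KK finite_subset by blast
  have "card (G \<union> (\<lambda>A. NN - A) ` G) = card G + card G"
    using card_Un_disjoint[OF fG _ d] card_image[OF inj_on_subset[OF inj_compl G(1)]] fG by simp
  moreover have "card (G \<union> (\<lambda>A. NN - A) ` G) \<le> card KK" using card_mono[OF finite_KK s] .
  ultimately show ?thesis using card_KK by simp
qed

lemma exists_max: "\<exists>Fs. Fs \<subseteq> KK \<and> intersecting Fs \<and> card Fs = PP"
proof -
  define F0 where "F0 = {A \<in> KK. 1 \<in> A}"
  have one: "1 \<in> NN" using k2 by simp
  have u: "KK = F0 \<union> (\<lambda>A. NN - A) ` F0"
  proof
    show "KK \<subseteq> F0 \<union> (\<lambda>A. NN - A) ` F0"
    proof
      fix A assume A: "A \<in> KK"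
      show "A \<in> F0 \<union> (\<lambda>A. NN - A) ` F0"
      proof (cases "1 \<in> A")
        case True thus ?thesis using A unfolding F0_def by auto
      next
        case False
        hence "NN - A \<in> F0" using compl_KK[OF A] one unfolding F0_def by auto
        moreover have "A = NN - (NN - A)" using A unfolding ksubsets_def by auto
        ultimately show ?thesis by blast
      qed
    qed
    show "F0 \<union> (\<lambda>A. NN - A) ` F0 \<subseteq> KK" using compl_KK unfolding F0_def by auto
  qed
  have d: "F0 \<inter> (\<lambda>A. NN - A) ` F0 = {}" unfolding F0_def by auto
  have fF0: "finite F0" using finite_KK unfolding F0_def by simp
  have "card KK = card F0 + card F0"
    using u card_Un_disjoint[OF fF0 _ d] card_image[OF inj_on_subset[OF inj_compl, of F0]] fF0
    unfolding F0_def by auto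
  hence c: "card F0 = PP" using card_KK by simp
  have "intersecting F0" unfolding intersecting_def F0_def by auto
  moreover have "F0 \<subseteq> KK" unfolding F0_def by auto
  ultimately show ?thesis using c by blast
qed

definition EE :: "nat set set \<Rightarrow> nat set set" where
  "EE Fs = ksubsets NN k \<union> {F \<union> {b} | F b. F \<in> Fs \<and> b \<in> BB}"

lemma EE_image: "{F \<union> {b} | F b. F \<in> Fs \<and> b \<in> BB} = (\<lambda>(A,b). insert b A) ` (Fs \<times> BB)"
  by fast

lemma EE_props:
  assumes Fs: "Fs \<subseteq> KK" "intersecting Fs"
  shows "mnk_intersecting m (2*k-2) k (EE Fs)"
    and "card (EE Fs) = ((2*k-2) choose k) + card Fs * MM"
proof -
  have fNN: "finite NN" by simp
  have notN: "insert b A \<notin> ksubsets NN k" if "b \<in> BB" for b A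
    using that unfolding ksubsets_def by auto
  have inj: "inj_on (\<lambda>(A,b). insert b A) (Fs \<times> BB)"
  proof (rule inj_onI, clarify)
    fix A b A' b' assume a: "A \<in> Fs" "b \<in> BB" "A' \<in> Fs" "b' \<in> BB" "insert b A = insert b' A'"
    have "A \<subseteq> NN" "A' \<subseteq> NN" using a Fs unfolding ksubsets_def by auto
    moreover have "b \<notin> NN" "b' \<notin> NN" using a by auto
    ultimately have "b = b'" using a(5) by blast
    moreover have "A = insert b A \<inter> NN" "A' = insert b' A' \<inter> NN"
      using \<open>A \<subseteq> NN\<close> \<open>A' \<subseteq> NN\<close> \<open>b \<notin> NN\<close> \<open>b' \<notin> NN\<close> by auto
    ultimately show "A = A' \<and> b = b'" using a(5) by simp
  qed
  have fFs: "finite Fs" using Fs finite_KK finite_subset by blast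
  have "card (EE Fs) = card (ksubsets NN k) + card ((\<lambda>(A,b). insert b A) ` (Fs \<times> BB))"
    unfolding EE_def EE_image
    by (rule card_Un_disjoint) (auto simp: fFs ksubsets_def intro: finite_subset[of _ "Pow NN"])
  also have "\<dots> = ((2*k-2) choose k) + card Fs * MM"
    using card_image[OF inj] card_kN card_BB by (simp add: card_cartesian_product)
  finally show "card (EE Fs) = ((2*k-2) choose k) + card Fs * MM" .
  have sub: "EE Fs \<subseteq> ksubsets {1..m} k"
  proof -
    have "NN \<subseteq> {1..m}" using mk by auto
    hence "ksubsets NN k \<subseteq> ksubsets {1..m} k" unfolding ksubsets_def by blast
    moreover have "insert b A \<in> ksubsets {1..m} k" if "A \<in> Fs" "b \<in> BB" for A b
    proof -
      have "A \<subseteq> NN" "card A = k - 1" using that Fs unfolding ksubsets_def by auto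
      moreover have "b \<notin> A" using \<open>A \<subseteq> NN\<close> that by fastforce
      moreover have "finite A" using \<open>A \<subseteq> NN\<close> finite_subset by blast
      moreover have "A \<subseteq> {1..m}" using \<open>A \<subseteq> NN\<close> mk by fastforce
      ultimately show ?thesis using that k2 mk unfolding ksubsets_def by auto
    qed
    ultimately show ?thesis unfolding EE_def EE_image by auto
  qed
  have int: "intersecting (EE Fs)"
    unfolding intersecting_def
  proof (intro ballI)
    fix X Y assume X: "X \<in> EE Fs" and Y: "Y \<in> EE Fs"
    have kk: "X \<inter> Y \<noteq> {}" if X: "X \<in> ksubsets NN k" and Y: "Y \<in> ksubsets NN k" for X Y
    proof
      assume d: "X \<inter> Y = {}"
      have f: "finite X" "finite Y" using X Y unfolding ksubsets_def by (auto intro: finite_subset)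
      have "card (X \<union> Y) = 2 * k" using card_Un_disjoint[OF f d] X Y unfolding ksubsets_def by simp
      moreover have "card (X \<union> Y) \<le> card NN" using X Y by (intro card_mono) (auto simp: ksubsets_def)
      ultimately show False using k2 by simp
    qed
    have kA: "X \<inter> insert b A \<noteq> {}" if X: "X \<in> ksubsets NN k" and A: "A \<in> Fs" for X A b
    proof
      assume d: "X \<inter> insert b A = {}"
      have AK: "A \<in> KK" using A Fs by auto
      have "X \<subseteq> NN - A" using X d unfolding ksubsets_def by auto
      hence "card X \<le> card (NN - A)" by (intro card_mono) auto
      moreover have "card (NN - A) = k - 1" using compl_KK[OF AK] unfolding ksubsets_def by simp
      ultimately show False using X k2 unfolding ksubsets_def by simp
    qed
    have AA: "insert b A \<inter> insert b' A' \<noteq> {}" if "A \<in> Fs" "A' \<in> Fs" for A A' b b'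
      using Fs(2) that unfolding intersecting_def by blast
    have cX: "X \<in> ksubsets NN k \<or> (\<exists>A b. A \<in> Fs \<and> X = insert b A)"
      using X unfolding EE_def EE_image by auto
    have cY: "Y \<in> ksubsets NN k \<or> (\<exists>A b. A \<in> Fs \<and> Y = insert b A)"
      using Y unfolding EE_def EE_image by auto
    show "X \<inter> Y \<noteq> {}"
    proof (cases "X \<in> ksubsets NN k")
      case True
      show ?thesis
      proof (cases "Y \<in> ksubsets NN k")
        case True2: True
        show ?thesis using kk[OF True True2] .
      next
        case False
        then obtain A b where "A \<in> Fs" "Y = insert b A" using cY by blast
        thus ?thesis using kA[OF True] by blast
      qed
    next
      case False
      then obtain A b where A: "A \<in> Fs" "X = insert b A" using cX by blast
      show ?thesis
      proof (cases "Y \<in> ksubsets NN k")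
        case True2: True
        have "Y \<inter> X \<noteq> {}" using kA[OF True2 A(1)] A(2) by blast
        thus ?thesis by blast
      next
        case False
        then obtain A' b' where "A' \<in> Fs" "Y = insert b' A'" using cY by blast
        thus ?thesis using AA[OF A(1)] A(2) by blast
      qed
    qed
  qed
  show "mnk_intersecting m (2*k-2) k (EE Fs)"
    unfolding mnk_intersecting_def using int sub unfolding EE_def by auto
qed

lemma bound:
  assumes F: "mnk_intersecting m (2*k-2) k F"
  shows "card F \<le> ((2*k-2) choose k) + PP * MM"
    and "card F = ((2*k-2) choose k) + PP * MM \<Longrightarrow>
          F = EE {A \<in> KK. sX F A = BB} \<and> intersecting {A \<in> KK. sX F A = BB}"
proof -
  have fF: "finite F"
    using F unfolding mnk_intersecting_def
    by (rule finite_subset[OF conjunct2[OF conjunct2]]) (auto simp: ksubsets_def intro: finite_subset[of _ "Pow {1..m}"])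
  have sub: "ksubsets NN k \<subseteq> F" using F unfolding mnk_intersecting_def by simp
  define T where "T = F - ksubsets NN k"
  have fT: "finite T" using fF unfolding T_def by simp
  have cF: "card F = ((2*k-2) choose k) + card T"
  proof -
    have "F = ksubsets NN k \<union> T" using sub unfolding T_def by auto
    moreover have "finite (ksubsets NN k)" using finite_subset[OF sub fF] .
    ultimately show ?thesis using card_Un_disjoint[of "ksubsets NN k" T] fT card_kN unfolding T_def by auto
  qed
  have TS: "T \<subseteq> (\<lambda>(A,b). insert b A) ` (SIGMA A:KK. sX F A)"
  proof
    fix G assume "G \<in> T"
    then obtain A b where "A \<in> KK" "b \<in> BB" "G = insert b A" "G \<in> F"
      using struct[OF F] unfolding T_def by blast
    thus "G \<in> (\<lambda>(A,b). insert b A) ` (SIGMA A:KK. sX F A)" unfolding sX_def by force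
  qed
  have fsX: "finite (sX F A)" for A using finite_subset[OF sX_sub] by simp
  have fS: "finite (SIGMA A:KK. sX F A)" using finite_KK fsX by (intro finite_SigmaI) auto
  have cT: "card T \<le> (\<Sum>A\<in>KK. card (sX F A))"
  proof -
    have "card T \<le> card ((\<lambda>(A,b). insert b A) ` (SIGMA A:KK. sX F A))"
      using card_mono[OF finite_imageI[OF fS] TS] .
    also have "\<dots> \<le> card (SIGMA A:KK. sX F A)" by (rule card_image_le[OF fS])
    also have "\<dots> = (\<Sum>A\<in>KK. card (sX F A))" using finite_KK fsX by (simp add: card_SigmaI)
    finally show ?thesis .
  qed
  have re: "(\<Sum>A\<in>KK. card (sX F (NN - A))) = (\<Sum>A\<in>KK. card (sX F A))"
    using sum.reindex[OF inj_compl, of "\<lambda>A. card (sX F A)"] compl_image_KK by (simp add: o_def)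
  have AN: "A \<in> KK \<Longrightarrow> A \<subseteq> NN" for A unfolding ksubsets_def by auto
  have tot: "(\<Sum>A\<in>KK. card (sX F A) + card (sX F (NN - A))) \<le> (\<Sum>A\<in>KK. MM)"
    using pair(1)[OF F AN] by (intro sum_mono) auto
  have two: "(\<Sum>A\<in>KK. card (sX F A) + card (sX F (NN - A))) = 2 * (\<Sum>A\<in>KK. card (sX F A))"
    using re by (simp add: sum.distrib)
  have sKK: "(\<Sum>A\<in>KK. MM) = 2 * PP * MM" using card_KK by simp
  have "2 * (\<Sum>A\<in>KK. card (sX F A)) \<le> 2 * (PP * MM)" using tot unfolding two sKK by (simp add: mult.assoc)
  hence sle: "(\<Sum>A\<in>KK. card (sX F A)) \<le> PP * MM" by simp
  show "card F \<le> ((2*k-2) choose k) + PP * MM" using cF cT sle by simp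
  assume eq: "card F = ((2*k-2) choose k) + PP * MM"
  have "(\<Sum>A\<in>KK. card (sX F A)) = PP * MM" using eq cF cT sle by simp
  hence "(\<Sum>A\<in>KK. card (sX F A) + card (sX F (NN - A))) = (\<Sum>A\<in>KK. MM)" unfolding two sKK by (simp add: mult.assoc)
  hence eqA: "A \<in> KK \<Longrightarrow> card (sX F A) + card (sX F (NN - A)) = MM" for A
    using sum_mono_inv[OF _ _ _ finite_KK] pair(1)[OF F AN] by blast
  have key: "sX F A = BB" if A: "A \<in> KK" and ne: "sX F A \<noteq> {}" for A
  proof -
    have "sX F (NN - A) = {}"
    proof (rule ccontr)
      assume "sX F (NN - A) \<noteq> {}"
      hence "card (sX F A) + card (sX F (NN - A)) = 2" using pair(2)[OF F AN[OF A] ne] by simp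
      thus False using eqA[OF A] mk by simp
    qed
    hence "card (sX F A) = card BB" using eqA[OF A] card_BB by simp
    thus ?thesis using card_subset_eq[OF _ sX_sub] by simp
  qed
  define Fs where "Fs = {A \<in> KK. sX F A = BB}"
  have FE: "F \<subseteq> EE Fs"
  proof
    fix G assume G: "G \<in> F"
    show "G \<in> EE Fs"
    proof (cases "G \<in> ksubsets NN k")
      case True thus ?thesis unfolding EE_def by simp
    next
      case False
      then obtain A b where A: "A \<in> KK" "b \<in> BB" "G = insert b A" using struct[OF F G] by blast
      hence "b \<in> sX F A" using G unfolding sX_def by simp
      hence "A \<in> Fs" using key[OF A(1)] A(1) unfolding Fs_def by blast
      thus ?thesis using A unfolding EE_def by blast
    qed
  qed
  have EF: "EE Fs \<subseteq> F"
  proof -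
    have "insert b A \<in> F" if "A \<in> Fs" "b \<in> BB" for A b
      using that unfolding Fs_def sX_def by blast
    thus ?thesis using sub unfolding EE_def EE_image by auto
  qed
  have "intersecting Fs"
    unfolding intersecting_def
  proof (intro ballI notI)
    fix A A' assume A: "A \<in> Fs" and A': "A' \<in> Fs" and d: "A \<inter> A' = {}"
    have AK: "A \<in> KK" "A' \<in> KK" using A A' unfolding Fs_def by auto
    have s: "A' \<subseteq> NN - A" using d AN[OF AK(2)] by auto
    have "card A' = card (NN - A)" using compl_KK[OF AK(1)] AK(2) unfolding ksubsets_def by simp
    hence "A' = NN - A" using card_subset_eq[OF _ s] by simp
    hence "card (sX F A) + card (sX F (NN - A)) = MM + MM"
      using A A' card_BB unfolding Fs_def by simp
    thus False using eqA[OF AK(1)] mk by simp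
  qed
  thus "F = EE {A \<in> KK. sX F A = BB} \<and> intersecting {A \<in> KK. sX F A = BB}"
    using FE EF unfolding Fs_def by blast
qed

end


theorem theorem9:
  fixes k m :: nat
  assumes "k \<ge> 2" and "m > 2 * k"
  shows "alpha m (2*k - 2) k = h m (2*k - 2) k
    \<and> (\<forall>\<F>. mnk_intersecting m (2*k - 2) k \<F> \<and> card \<F> = alpha m (2*k - 2) k \<longrightarrow>
         (\<exists>\<F>s. \<F>s \<subseteq> ksubsets {1..2*k - 2} (k - 1) \<and> intersecting \<F>s
            \<and> (\<forall>\<G>. \<G> \<subseteq> ksubsets {1..2*k - 2} (k - 1) \<and> intersecting \<G> \<longrightarrow> card \<G> \<le> card \<F>s)
            \<and> \<F> = ksubsets {1..2*k - 2} k \<union> {F \<union> {b} | F b. F \<in> \<F>s \<and> b \<in> {2*k - 1..m}}))"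
proof -
  note a = assms(1) assms(2)
  define HH where "HH = ((2*k-2) choose k) + ((2*k-3) choose (k-2)) * (m + 2 - 2*k)"
  have hv: "h m (2*k-2) k = HH" using h_val[OF a] unfolding HH_def .
  define S where "S = {card \<F> | \<F>. mnk_intersecting m (2*k - 2) k \<F>}"
  have le: "x \<le> HH" if "x \<in> S" for x using that bound(1)[OF a] unfolding S_def HH_def by auto
  obtain Fs0 where Fs0: "Fs0 \<subseteq> ksubsets {1..2*k - 2} (k - 1)" "intersecting Fs0"
    "card Fs0 = (2*k-3) choose (k-2)" using exists_max[OF a] by blast
  have "HH \<in> S" using EE_props[OF a Fs0(1,2)] Fs0(3) unfolding S_def HH_def by (metis (mono_tags, lifting) mem_Collect_eq)
  moreover have "finite S" using le by (intro finite_subset[of S "{..HH}"]) auto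
  ultimately have al: "alpha m (2*k-2) k = HH"
    unfolding alpha_def S_def[symmetric] using le by (intro Max_eqI) auto
  have mpos: "m + 2 - 2*k > 0" using a by simp
  show ?thesis
  proof (intro conjI allI impI)
    show "alpha m (2*k - 2) k = h m (2*k - 2) k" using al hv by simp
    fix F assume F: "mnk_intersecting m (2*k - 2) k F \<and> card F = alpha m (2*k - 2) k"
    define Fs where "Fs = {A \<in> ksubsets {1..2*k - 2} (k - 1). sX k m F A = {2*k-1..m}}"
    have FE: "F = EE k m Fs" "intersecting Fs"
      using bound(2)[OF a, of F] F al unfolding HH_def Fs_def by auto
    have FsK: "Fs \<subseteq> ksubsets {1..2*k - 2} (k - 1)" unfolding Fs_def by auto
    have "card F = HH" using F al by simp
    hence "((2*k-2) choose k) + card Fs * (m + 2 - 2*k) = HH"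
      using EE_props(2)[OF a FsK FE(2)] FE(1) by simp
    hence cFs: "card Fs = (2*k-3) choose (k-2)" using mpos unfolding HH_def by simp
    show "\<exists>\<F>s. \<F>s \<subseteq> ksubsets {1..2*k - 2} (k - 1) \<and> intersecting \<F>s
            \<and> (\<forall>\<G>. \<G> \<subseteq> ksubsets {1..2*k - 2} (k - 1) \<and> intersecting \<G> \<longrightarrow> card \<G> \<le> card \<F>s)
            \<and> F = ksubsets {1..2*k - 2} k \<union> {F \<union> {b} | F b. F \<in> \<F>s \<and> b \<in> {2*k - 1..m}}"
    proof (intro exI[of _ Fs] conjI allI impI)
      show "F = ksubsets {1..2*k - 2} k \<union> {F \<union> {b} | F b. F \<in> Fs \<and> b \<in> {2*k - 1..m}}"
        using FE(1) by (simp add: EE_def[OF a])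
      fix G assume "G \<subseteq> ksubsets {1..2*k - 2} (k - 1) \<and> intersecting G"
      thus "card G \<le> card Fs" using int_le[OF a] cFs by simp
    qed (use FsK FE in auto)
  qed
qed

end
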